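(* Let $T$ be a rooted binary tree whose leaves are each coloured black or white, with the colouring extended to all nodes as described in the context, and assume that $T$ contains more than one maximal black subtree. If there exists an SPR operation $(u,v)$ on $T$ whose resulting tree contains at most one maximal black subtree (i.e. the resulting tree is compatible with the data), then that operation belongs to one of the classes $(\mathrm{B},\mathrm{r},\mathrm{B},\ast)$, $(\mathrm{W},\mathrm{r},\mathrm{W},\ast)$, $(\mathrm{W},\mathrm{r},\mathrm{G},\ast)$ or $(\mathrm{W},\mathrm{r},\mathrm{B},\mathrm{r})$.
   Context: All trees are rooted binary trees; every non-leaf node has exactly two children and every non-root node $n$ has a parent $\mathrm{pa}(n)$. A "subtree" always means a node together with all of its descendants (so its leaves are leaves of the original tree). Colouring: each leaf is coloured black (B) or white (W) (in the application, black iff the corresponding observed sequence carries allele 1 at the next segregating site). The colouring is extended recursively to all nodes: an internal node is black if both children are black, white if both children are white, and grey (G) otherwise. A subtree is black (resp. white) if all its nodes are black (resp. white); it is maximal if no strictly larger subtree containing it is black (resp. white). Classification: a black or white node is of type "r" (subtree root) if it is the root of a maximal subtree of its own colour, and of type "b" (branch) otherwise; all grey nodes are of type "b" by convention. A tree is called compatible (with the data) if it contains at most one maximal black subtree. SPR operation $(u,v)$ on $T$: $u$ is a non-root node, $v$ is a node of $T$ with $v\notin\{u,\mathrm{pa}(u)\}$ and $v$ not a descendant of $u$; the subtree rooted at $u$ is pruned (the edge to $u$ is removed and $\mathrm{pa}(u)$ is deleted, its other child taking its place), and then regrafted onto the branch above $v$: a new node is inserted on the edge from $v$ to its parent (or as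 a new root above $v$ if $v$ is the root) whose two children are $v$ and $u$. Colours of the resulting tree are recomputed by the same rule. The SPR operation $(u,v)$ belongs to the equivalence class $(x,y,z,w)$ where $x,z\in\{\mathrm{B},\mathrm{W},\mathrm{G}\}$ are the colours in $T$ of the pruned node $u$ and regrafting node $v$, and $y,w\in\{\mathrm{r},\mathrm{b}\}$ are their respective classifications in $T$; $\ast$ is a wildcard standing for any value. *)

theory Defs
  imports Main "HOL-Library.Sublist"
begin

text \<open>Rooted binary trees; leaves carry their colour (True = black, False = white).
Nodes are addressed by positions: paths from the root (False = left child, True = right child).\<close>

datatype tree = Leaf bool | Node tree tree

datatype colour = B | W | G

datatype kind = R | Br

fun col :: "tree \<Rightarrow> colour" where
  "col (Leaf c) = (if c then B else W)"
| "col (Node l r) =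
     (if col l = B \<and> col r = B then B else if col l = W \<and> col r = W then W else G)"

fun positions :: "tree \<Rightarrow> bool list set" where
  "positions (Leaf _) = {[]}"
| "positions (Node l r) = insert [] (Cons False ` positions l \<union> Cons True ` positions r)"

fun sub :: "tree \<Rightarrow> bool list \<Rightarrow> tree" where
  "sub t [] = t"
| "sub (Node l r) (b # p) = sub (if b then r else l) p"
| "sub (Leaf c) (_ # _) = Leaf c"

fun repl :: "tree \<Rightarrow> bool list \<Rightarrow> tree \<Rightarrow> tree" where
  "repl t [] s = s"
| "repl (Node l r) (b # p) s = (if b then Node l (repl r p s) else Node (repl l p s) r)"
| "repl (Leaf c) (_ # _) s = Leaf c"

text \<open>Classification: a black/white node is of type r iff it roots a maximal subtree of its
colour, i.e. no strictly larger subtree containing it (= subtree at a proper ancestor) has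
the same colour; grey nodes are of type b.\<close>
definition kind_of :: "tree \<Rightarrow> bool list \<Rightarrow> kind" where
  "kind_of t p = (if col (sub t p) \<noteq> G \<and>
                    (\<forall>q. strict_prefix q p \<longrightarrow> col (sub t q) \<noteq> col (sub t p))
                  then R else Br)"

definition max_black :: "tree \<Rightarrow> bool list set" where
  "max_black t = {p \<in> positions t. col (sub t p) = B \<and> kind_of t p = R}"

definition compatible :: "tree \<Rightarrow> bool" where
  "compatible t \<longleftrightarrow> card (max_black t) \<le> 1"

definition spr_valid :: "tree \<Rightarrow> bool list \<Rightarrow> bool list \<Rightarrow> bool" where
  "spr_valid t u v \<longleftrightarrow> u \<in> positions t \<and> u \<noteq> [] \<and> v \<in> positions t \<and>
     v \<noteq> butlast u \<and> \<not> prefix u v"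

definition prune :: "tree \<Rightarrow> bool list \<Rightarrow> tree" where
  "prune t u = repl t (butlast u) (sub t (butlast u @ [\<not> last u]))"

text \<open>Position of node v in the pruned tree.\<close>
definition shift :: "bool list \<Rightarrow> bool list \<Rightarrow> bool list" where
  "shift u v = (if prefix (butlast u @ [\<not> last u]) v then butlast u @ drop (length u) v else v)"

text \<open>Regraft the pruned subtree onto the branch above v.\<close>
definition spr :: "tree \<Rightarrow> bool list \<Rightarrow> bool list \<Rightarrow> tree" where
  "spr t u v = (let t' = prune t u; v' = shift u v in repl t' v' (Node (sub t' v') (sub t u)))"

definition spr_class :: "tree \<Rightarrow> bool list \<Rightarrow> bool list \<Rightarrow> colour \<times> kind \<times> colour \<times> kind" where
  "spr_class t u v = (col (sub t u), kind_of t u, col (sub t v), kind_of t v)"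

end

theory Submission imports Defs begin

fun nb :: "tree \<Rightarrow> nat" where
  "nb (Leaf c) = (if c then 1 else 0)"
| "nb (Node l r) = (if col l = B \<and> col r = B then 1 else nb l + nb r)"

lemma col_nb: "(col t = W \<longleftrightarrow> nb t = 0) \<and> (col t = B \<longrightarrow> nb t = 1)"
  by (induction t) auto

lemma col_W: "col t = W \<longleftrightarrow> nb t = 0" using col_nb by blast
lemma col_B: "col t = B \<Longrightarrow> nb t = 1" using col_nb by blast
lemma col_G: "col t = G \<Longrightarrow> nb t \<ge> 1"
proof -
  assume "col t = G" hence "col t \<noteq> W" by simp
  thus ?thesis using col_W[of t] by linarith
qed

lemma nb_Node_le: "nb (Node l r) \<le> nb l + nb r"
  using col_B by auto

lemma max_black_Leaf: "max_black (Leaf c) = (if c then {[]} else {})"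
  by (auto simp: max_black_def kind_of_def)

lemma max_black_Node_B: "col (Node l r) = B \<Longrightarrow> max_black (Node l r) = {[]}"
  apply (auto simp: max_black_def kind_of_def simp del: col.simps)
   apply (drule spec[of _ "[]"], simp)+
  done

lemma all_sp_Cons: "(\<forall>q. strict_prefix q (c#p) \<longrightarrow> P q) \<longleftrightarrow> P [] \<and> (\<forall>q. strict_prefix q p \<longrightarrow> P (c#q))"
  apply auto
  apply (case_tac q)
   apply auto
  done

lemma max_black_Node_nB: "col (Node l r) \<noteq> B \<Longrightarrow>
   max_black (Node l r) = Cons False ` max_black l \<union> Cons True ` max_black r"
  apply (rule set_eqI)
  subgoal for p
    apply (cases p)
     apply (auto simp: max_black_def kind_of_def all_sp_Cons simp del: col.simps)
    done
  done

lemma finite_positions: "finite (positions t)"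
  by (induction t) auto

lemma finite_max_black: "finite (max_black t)"
  using finite_positions[of t] unfolding max_black_def by auto

lemma nb_card: "nb t = card (max_black t)"
proof (induction t)
  case (Leaf c) thus ?case by (simp add: max_black_Leaf)
next
  case (Node l r)
  show ?case
  proof (cases "col (Node l r) = B")
    case True thus ?thesis using max_black_Node_B[OF True] by (simp del: col.simps) (simp split: if_splits)
  next
    case False
    have "card (Cons False ` max_black l \<union> Cons True ` max_black r)
        = card (Cons False ` max_black l) + card (Cons True ` max_black r)"
      by (rule card_Un_disjoint) (auto simp: finite_max_black)
    also have "\<dots> = card (max_black l) + card (max_black r)"
      by (simp add: card_image)
    finally show ?thesis using False Node max_black_Node_nB[OF False] by (auto split: if_splits)
  qed
qed


lemma sub_append: "sub t (p@q) = sub (sub t p) q"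
proof (induction p arbitrary: t)
  case Nil thus ?case by simp
next
  case (Cons c p) thus ?case by (cases t) (auto, cases q, auto)
qed

lemma positions_append: "p@q \<in> positions t \<longleftrightarrow> p \<in> positions t \<and> q \<in> positions (sub t p)"
proof (induction p arbitrary: t)
  case Nil thus ?case by (cases t) auto
next
  case (Cons c p) thus ?case by (cases t) auto
qed

lemma positions_prefix: "p@q \<in> positions t \<Longrightarrow> p \<in> positions t"
  using positions_append by blast

lemma repl_sub_id: "repl t p (sub t p) = t"
proof (induction p arbitrary: t)
  case Nil thus ?case by simp
next
  case (Cons c p) thus ?case by (cases t) auto
qed

lemma sub_repl_same: "p \<in> positions t \<Longrightarrow> sub (repl t p x) (p@q) = sub x q"
proof (induction p arbitrary: t)
  case Nil thus ?case by simp
next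
  case (Cons c p) thus ?case by (cases t) auto
qed

lemma positions_repl_same: "p \<in> positions t \<Longrightarrow> (p@q \<in> positions (repl t p x)) = (q \<in> positions x)"
proof (induction p arbitrary: t)
  case Nil thus ?case by simp
next
  case (Cons c p) thus ?case by (cases t) auto
qed

lemma sub_repl_indep: "\<not> prefix p q \<Longrightarrow> \<not> prefix q p \<Longrightarrow>
   sub (repl t p x) q = sub t q \<and> (q \<in> positions (repl t p x) \<longleftrightarrow> q \<in> positions t)"
proof (induction p arbitrary: t q)
  case Nil thus ?case by simp
next
  case (Cons c p)
  then obtain d q' where q: "q = d # q'" by (cases q) auto
  show ?case
  proof (cases t)
    case (Leaf x) thus ?thesis by simp
  next
    case (Node l r)
    show ?thesis
    proof (cases "c = d")
      case True
      hence "\<not> prefix p q'" "\<not> prefix q' p" using Cons.prems q by auto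
      thus ?thesis using Cons.IH Node q True by auto
    next
      case False
      thus ?thesis using Node q by auto
    qed
  qed
qed

lemma sub_repl_anc: "p@r \<in> positions t \<Longrightarrow> sub (repl t (p@r) x) p = repl (sub t p) r x"
proof (induction p arbitrary: t)
  case Nil thus ?case by simp
next
  case (Cons c p) thus ?case by (cases t) auto
qed

lemma col_B_sub: "col t = B \<Longrightarrow> col (sub t p) = B"
proof (induction p arbitrary: t)
  case Nil thus ?case by simp
next
  case (Cons c p) thus ?case by (cases t) (auto split: if_splits)
qed

lemma col_W_sub: "col t = W \<Longrightarrow> col (sub t p) = W"
proof (induction p arbitrary: t)
  case Nil thus ?case by simp
next
  case (Cons c p) thus ?case by (cases t) (auto split: if_splits)
qed

lemma child_pos: "a@[b] \<in> positions t \<Longrightarrow>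
  \<exists>l r. sub t a = Node l r \<and> sub t (a@[b]) = (if b then r else l) \<and> sub t (a@[\<not>b]) = (if b then l else r)"
  apply (simp only: positions_append sub_append)
  apply (cases "sub t a")
   apply auto
  done

lemma nb_sub_le: "nb (sub t p) \<le> nb t"
proof (induction p arbitrary: t)
  case Nil thus ?case by simp
next
  case (Cons c p)
  show ?case
  proof (cases t)
    case (Leaf x) thus ?thesis by simp
  next
    case (Node l r)
    show ?thesis
    proof (cases "col t = B")
      case True thus ?thesis using col_B_sub[OF True, of "c#p"] col_B by simp
    next
      case False thus ?thesis using Cons.IH[of l] Cons.IH[of r] Node by auto
    qed
  qed
qed


lemma repl_cong: "col x = col y \<Longrightarrow> nb x = nb y \<Longrightarrow>
   col (repl t p x) = col (repl t p y) \<and> nb (repl t p x) = nb (repl t p y)"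
proof (induction p arbitrary: t)
  case Nil thus ?case by simp
next
  case (Cons c p) thus ?case by (cases t) auto
qed

lemma relA: "nb x \<le> nb y \<Longrightarrow> (col y = B \<longrightarrow> col x = B) \<Longrightarrow>
   nb (repl t p x) \<le> nb (repl t p y) \<and> (col (repl t p y) = B \<longrightarrow> col (repl t p x) = B)"
proof (induction p arbitrary: t)
  case Nil thus ?case by simp
next
  case (Cons c p)
  show ?case
  proof (cases t)
    case (Leaf x) thus ?thesis by simp
  next
    case (Node l r)
    show ?thesis
    proof (cases c)
      case True
      have ih: "nb (repl r p x) \<le> nb (repl r p y)" "col (repl r p y) = B \<longrightarrow> col (repl r p x) = B"
        using Cons by auto
      have "col (repl r p x) = B \<Longrightarrow> nb (repl r p x) = 1" by (rule col_B)
      have "col l = B \<Longrightarrow> nb l = 1" by (rule col_B)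
      thus ?thesis using ih Node True col_B[of "repl r p x"] by auto
    next
      case False
      have ih: "nb (repl l p x) \<le> nb (repl l p y)" "col (repl l p y) = B \<longrightarrow> col (repl l p x) = B"
        using Cons by auto
      have "col r = B \<Longrightarrow> nb r = 1" by (rule col_B)
      thus ?thesis using ih Node False col_B[of "repl l p x"] by auto
    qed
  qed
qed

lemma relB: "p \<in> positions t \<Longrightarrow> col y \<noteq> B \<Longrightarrow> nb x + k \<le> nb y \<Longrightarrow>
   col (repl t p y) \<noteq> B \<and> nb (repl t p x) + k \<le> nb (repl t p y)"
proof (induction p arbitrary: t)
  case Nil thus ?case by simp
next
  case (Cons c p)
  then obtain l r where Node: "t = Node l r" by (cases t) auto
  show ?case
  proof (cases c)
    case True
    have ih: "col (repl r p y) \<noteq> B" "nb (repl r p x) + k \<le> nb (repl r p y)"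
      using Cons Node True by auto
    thus ?thesis using Node True nb_Node_le[of l "repl r p x"] by auto
  next
    case False
    have ih: "col (repl l p y) \<noteq> B" "nb (repl l p x) + k \<le> nb (repl l p y)"
      using Cons Node False by auto
    thus ?thesis using Node False nb_Node_le[of "repl l p x" r] by auto
  qed
qed

lemma Wctx: "col (repl t p x) = W \<Longrightarrow> nb (repl t p y) \<le> nb y"
proof (induction p arbitrary: t)
  case Nil thus ?case by simp
next
  case (Cons c p)
  show ?case
  proof (cases t)
    case (Leaf z) thus ?thesis using Cons by (auto split: if_splits)
  next
    case (Node l r)
    show ?thesis
    proof (cases c)
      case True
      hence "col (repl r p x) = W" "col l = W" using Cons.prems Node by (auto split: if_splits)
      thus ?thesis using Cons.IH[of r] Node True nb_Node_le[of l "repl r p y"] col_W[of l] by auto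
    next
      case False
      hence "col (repl l p x) = W" "col r = W" using Cons.prems Node by (auto split: if_splits)
      thus ?thesis using Cons.IH[of l] Node False nb_Node_le[of "repl l p y" r] col_W[of r] by auto
    qed
  qed
qed

lemma grey_up: "p \<in> positions t \<Longrightarrow> col y = G \<Longrightarrow> col (repl t p y) = G"
proof (induction p arbitrary: t)
  case Nil thus ?case by simp
next
  case (Cons c p) thus ?case by (cases t) auto
qed

lemma LB: "p \<in> positions t \<Longrightarrow> col y = G \<Longrightarrow> nb y + nb (repl t p (Leaf False)) \<le> nb (repl t p y)"
proof (induction p arbitrary: t)
  case Nil thus ?case by simp
next
  case (Cons c p)
  then obtain l r where Node: "t = Node l r" by (cases t) auto
  show ?case
  proof (cases c)
    case True
    have ih: "col (repl r p y) = G" "nb y + nb (repl r p (Leaf False)) \<le> nb (repl r p y)"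
      using Cons Node True grey_up by auto
    thus ?thesis using Node True nb_Node_le[of l "repl r p (Leaf False)"] by auto
  next
    case False
    have ih: "col (repl l p y) = G" "nb y + nb (repl l p (Leaf False)) \<le> nb (repl l p y)"
      using Cons Node False grey_up by auto
    thus ?thesis using Node False nb_Node_le[of "repl l p (Leaf False)" r] by auto
  qed
qed


lemma SH:
  assumes "a@[b] \<in> positions t" "q \<in> positions t" "\<not> prefix q a" "\<not> prefix (a@[b]) q"
  shows "shift (a@[b]) q \<in> positions (prune t (a@[b])) \<and> sub (prune t (a@[b])) (shift (a@[b]) q) = sub t q"
proof (cases "prefix (a@[\<not>b]) q")
  case True
  then obtain r where q: "q = a@[\<not>b]@r" by (auto simp: prefix_def)
  have apos: "a \<in> positions t" using assms(1) positions_prefix by blast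
  have sh: "shift (a@[b]) q = a@r" using True q by (simp add: shift_def)
  have "a@[\<not>b] \<in> positions t" "r \<in> positions (sub t (a@[\<not>b]))"
    using assms(2) q positions_append[of "a@[\<not>b]" r t] by auto
  thus ?thesis using sh q apos sub_repl_same[OF apos] positions_repl_same[OF apos] sub_append[of t "a@[\<not>b]" r]
    by (simp add: prune_def)
next
  case False
  have sh: "shift (a@[b]) q = q" using False by (simp add: shift_def)
  have "\<not> prefix a q"
  proof
    assume "prefix a q"
    then obtain zs where q: "q = a@zs" by (auto simp: prefix_def)
    show False
    proof (cases zs)
      case Nil thus False using assms(3) q by simp
    next
      case (Cons c zs')
      thus False using assms(4) False q by (cases "c = b") auto
    qed
  qed
  thus ?thesis using sh sub_repl_indep[of a q] assms(2,3) by (simp add: prune_def)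
qed

lemma shift_snoc: "\<not> prefix c a \<Longrightarrow> shift (a@[b]) (c@[d]) = shift (a@[b]) c @ [d]"
proof (cases "prefix (a@[\<not>b]) c")
  case True
  then obtain r where "c = a@[\<not>b]@r" by (auto simp: prefix_def)
  thus ?thesis using True by (simp add: shift_def)
next
  case False
  assume "\<not> prefix c a"
  hence "\<not> prefix (a@[\<not>b]) (c@[d])" using False by (auto simp: prefix_snoc)
  thus ?thesis using False by (simp add: shift_def)
qed


lemma Nil_pos: "[] \<in> positions t"
  by (cases t) auto

theorem theorem1:
  fixes T :: tree and u v :: "bool list"
  assumes "card (max_black T) > 1"
    and "spr_valid T u v"
    and "compatible (spr T u v)"
  shows "(\<exists>y. spr_class T u v = (B, R, B, y)) \<or> (\<exists>y. spr_class T u v = (W, R, W, y))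
       \<or> (\<exists>y. spr_class T u v = (W, R, G, y)) \<or> spr_class T u v = (W, R, B, R)"
proof -
  obtain a b where u: "u = a@[b]" using assms(2) unfolding spr_valid_def by (metis append_butlast_last_id)
  have upos: "a@[b] \<in> positions T" using assms(2) u by (simp add: spr_valid_def)
  have apos: "a \<in> positions T" using positions_prefix upos by blast
  have vpos: "v \<in> positions T" "v \<noteq> a" "\<not> prefix (a@[b]) v" using assms(2) u by (auto simp: spr_valid_def)
  define s where "s = sub T (a@[\<not>b])"
  define U where "U = sub T u"
  define P where "P = prune T u"
  define v' where "v' = shift u v"
  define x where "x = sub P v'"
  have Pdef: "P = repl T a s" by (simp add: P_def prune_def s_def u)
  have T': "spr T u v = repl P v' (Node x U)" by (simp add: spr_def Let_def P_def v'_def x_def U_def)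
  have nbT: "nb T \<ge> 2" using assms(1) nb_card by simp
  have nbT': "nb (repl P v' (Node x U)) \<le> 1" using assms(3) by (simp add: compatible_def nb_card[symmetric] T')
  obtain l r where lr: "sub T a = Node l r" "U = (if b then r else l)" "s = (if b then l else r)"
    using child_pos[OF upos] unfolding U_def s_def u by blast
  have subTa: "nb (sub T a) \<le> nb s + nb U" using lr nb_Node_le[of l r] by (cases b) auto
  have sP: "sub P a = s" using sub_repl_same[OF apos, of s "[]"] Pdef by simp
  have aP: "a \<in> positions P" using positions_repl_same[OF apos, of "[]" s] Pdef Nil_pos by simp
  have v'pos: "v' \<in> positions P"
  proof (cases "prefix v a")
    case True
    have "\<not> prefix (a@[\<not>b]) v"
    proof
      assume "prefix (a@[\<not>b]) v"
      hence "length (a@[\<not>b]) \<le> length v" by (rule prefix_length_le)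
      moreover have "length v \<le> length a" using True by (rule prefix_length_le)
      ultimately show False by simp
    qed
    hence "v' = v" by (simp add: v'_def shift_def u)
    moreover obtain r where "a = v@r" using True by (auto simp: prefix_def)
    ultimately show ?thesis using aP positions_prefix by blast
  next
    case False
    thus ?thesis using SH[OF upos vpos(1) False vpos(3)] by (simp add: v'_def P_def u)
  qed
  have PT': "nb P \<le> nb (repl P v' (Node x U))"
  proof -
    have h1: "nb x \<le> nb (Node x U)" using col_B[of x] by simp
    have h2: "col (Node x U) = B \<longrightarrow> col x = B" by simp
    have rA: "nb (repl P v' x) \<le> nb (repl P v' (Node x U))" using relA[of x "Node x U" P v'] h1 h2 by blast
    have "repl P v' x = P" unfolding x_def by (rule repl_sub_id)
    thus ?thesis using rA by simp
  qed
  have key: False if knB: "col (Node x U) \<noteq> B" and kU: "nb U \<ge> 1"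
  proof -
    have "nb x + nb U \<le> nb (Node x U)" using knB by auto
    hence "nb (repl P v' x) + nb U \<le> nb (repl P v' (Node x U))"
      using relB[OF v'pos knB, of x "nb U"] by blast
    moreover have "repl P v' x = P" unfolding x_def by (rule repl_sub_id)
    ultimately have "nb P + nb U \<le> nb (repl P v' (Node x U))" by simp
    hence "nb P = 0" "nb U \<le> 1" using nbT' kU by auto
    hence "col (repl T a s) = W" using col_W Pdef by simp
    hence "nb T \<le> nb (sub T a)" using Wctx[of T a s "sub T a"] repl_sub_id[of T a] by simp
    moreover have "nb s = 0"
    proof -
      have "col P = W" using \<open>nb P = 0\<close> col_W by simp
      hence "col s = W" using col_W_sub[of P a] sP by simp
      thus ?thesis using col_W by simp
    qed
    ultimately show False using subTa nbT \<open>nb U \<le> 1\<close> by simp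
  qed
  have c1: "col U \<noteq> G"
  proof
    assume "col U = G"
    thus False using key col_G[of U] by auto
  qed
  have c2: "kind_of T u = R"
  proof (rule ccontr)
    assume "kind_of T u \<noteq> R"
    then obtain q where q: "strict_prefix q u" "col (sub T q) = col U"
      using c1 unfolding kind_of_def U_def by (auto split: if_splits)
    have "prefix q a" using q(1) u by (auto simp: strict_prefix_def)
    then obtain r' where r': "a = q@r'" by (auto simp: prefix_def)
    have ca: "col (sub T a) = col U"
      using c1 q(2) col_B_sub[of "sub T q" r'] col_W_sub[of "sub T q" r'] r' sub_append[of T q r']
      by (cases "col U") auto
    have cs: "col s = col U" using ca c1 lr by (cases "col U"; cases b) (auto split: if_splits)
    have "nb s = nb (sub T a)" using cs ca c1 col_B col_W by (cases "col U") auto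
    hence "nb P = nb T" using repl_cong[of s "sub T a" T a] cs ca repl_sub_id[of T a] Pdef by simp
    thus False using PT' nbT' nbT by simp
  qed
  have c3: "col (sub T v) = B" if UB: "col U = B"
  proof (rule ccontr)
    assume nvB: "col (sub T v) \<noteq> B"
    have "col x \<noteq> B"
    proof (cases "prefix v a")
      case True
      have "\<not> prefix (a@[\<not>b]) v"
    proof
      assume "prefix (a@[\<not>b]) v"
      hence "length (a@[\<not>b]) \<le> length v" by (rule prefix_length_le)
      moreover have "length v \<le> length a" using True by (rule prefix_length_le)
      ultimately show False by simp
    qed
      hence vv: "v' = v" by (simp add: v'_def shift_def u)
      obtain r' where r': "a = v@r'" using True by (auto simp: prefix_def)
      have xeq: "x = repl (sub T v) r' s" using sub_repl_anc[of v r' T s] apos r' x_def vv Pdef by simp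
      have r'pos: "r' \<in> positions (sub T v)" using apos r' positions_append by blast
      show ?thesis
      proof
        assume xB: "col x = B"
        have "sub x r' = s" using sub_repl_same[OF r'pos, of s "[]"] xeq by simp
        hence sB: "col s = B" using col_B_sub[OF xB, of r'] by simp
        have "col (sub T a) = B" using lr sB UB by (cases b) auto
        hence "col (sub T a) = col s" "nb (sub T a) = nb s" using sB col_B by auto
        hence "col (repl (sub T v) r' (sub T a)) = col x"
          using repl_cong[of "sub T a" s "sub T v" r'] xeq by simp
        moreover have "repl (sub T v) r' (sub T a) = sub T v"
          using repl_sub_id[of "sub T v" r'] r' sub_append[of T v r'] by simp
        ultimately show False using xB nvB by simp
      qed
    next
      case False
      thus ?thesis using SH[OF upos vpos(1) False vpos(3)] nvB by (simp add: v'_def P_def u x_def)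
    qed
    thus False using key UB col_B[of U] by auto
  qed
  have c4: "kind_of T v = R" if UW: "col U = W" and vB: "col (sub T v) = B"
  proof (rule ccontr)
    assume "kind_of T v \<noteq> R"
    then obtain q where q: "strict_prefix q v" "col (sub T q) = B"
      using vB unfolding kind_of_def by (auto split: if_splits)
    have "v \<noteq> []" using q(1) by auto
    then obtain c d where vcd: "v = c@[d]" by (metis append_butlast_last_id)
    have "prefix q c" using q(1) vcd by (auto simp: strict_prefix_def)
    then obtain r1 where "c = q@r1" by (auto simp: prefix_def)
    hence cB: "col (sub T c) = B" using col_B_sub[OF q(2), of r1] sub_append[of T q r1] by simp
    have notpre: "\<not> prefix w a" if "col (sub T w) = B" for w
    proof
      assume "prefix w a"
      then obtain r2 where "a = w@r2" by (auto simp: prefix_def)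
      hence "U = sub (sub T w) (r2@[b])" using sub_append U_def u by simp
      thus False using col_B_sub[OF that, of "r2@[b]"] UW by simp
    qed
    have ncv: "\<not> prefix v a" "\<not> prefix c a" using notpre vB cB by auto
    have "\<not> prefix (a@[b]) c"
    proof
      assume "prefix (a@[b]) c"
      then obtain zs where "c = (a@[b])@zs" by (auto simp: prefix_def)
      hence "prefix (a@[b]) v" using vcd by simp
      thus False using vpos(3) by simp
    qed
    moreover have cpos: "c \<in> positions T" using vpos(1) vcd positions_prefix by blast
    ultimately have SHc: "sub P (shift u c) = sub T c" using SH[OF upos cpos ncv(2)] by (simp add: P_def u)
    have xv: "x = sub T v" using SH[OF upos vpos(1) ncv(1) vpos(3)] by (simp add: v'_def P_def u x_def)
    have v'eq: "v' = shift u c @ [d]" using shift_snoc[OF ncv(2)] vcd u v'_def by simp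
    obtain l' r' where lr': "sub T c = Node l' r'" using child_pos[of c d T] vpos(1) vcd by blast
    have "col l' = B" "col r' = B" using cB lr' by (auto split: if_splits)
    hence "nb (repl (sub T c) [d] (Leaf False)) = 1" using lr' col_B by (cases d) auto
    moreover have "sub (repl P v' (Leaf False)) (shift u c) = repl (sub T c) [d] (Leaf False)"
      using sub_repl_anc[of "shift u c" "[d]" P "Leaf False"] v'pos v'eq SHc by simp
    ultimately have "nb (repl P v' (Leaf False)) \<ge> 1" using nb_sub_le[of "repl P v' (Leaf False)" "shift u c"] by simp
    moreover have "col (Node x U) = G" "nb (Node x U) = 1" using xv vB UW col_B col_W by auto
    ultimately show False using LB[OF v'pos, of "Node x U"] nbT' by simp
  qed
  show ?thesis
  proof (cases "col U")
    case B thus ?thesis using c2 c3 by (simp add: spr_class_def U_def)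
  next
    case W thus ?thesis using c2 c4 by (cases "col (sub T v)") (auto simp: spr_class_def U_def)
  next
    case G thus ?thesis using c1 by simp
  qed
qed

end
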